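(* The topology of any first countable topological semigroup $S$ with an open right unit is generated by a single left-subinvariant $\overline{\mathsf{dist}}$-continuous quasi-pseudometric; if moreover $S$ is semiregular, this quasi-pseudometric can additionally be chosen right-continuous.
   Context: A topological semigroup is a topological space with continuous associative multiplication; $e$ is an open right unit if $xe=x$ for all $x$ and $xV$ is a neighborhood of $x$ for every neighborhood $V$ of $e$ and every $x$. Semiregular: every neighborhood $O_x$ of $x$ contains $\mathrm{int}\,\overline{U_x}$ for some neighborhood $U_x$ of $x$. A quasi-pseudometric is $d:S\times S\to[0,\infty)$ with $d(x,x)=0$ and the triangle inequality; left-subinvariant if $d(zx,zy)\le d(x,y)$ for all $x,y,z$; right-continuous if $y\mapsto d(x,y)$ is continuous for each $x$; $\overline{\mathsf{dist}}$-continuous if for every non-empty $A\subset S$ the function $x\mapsto\inf\{\varepsilon>0:x\in\overline{B_d(A,\varepsilon)}\}$ is continuous, where $B_d(A,\varepsilon)=\{y:\exists a\in A\ d(a,y)<\varepsilon\}$. $d$ generates the topology if the balls $B_d(x,\varepsilon)=\{y:d(x,y)<\varepsilon\}$ form a subbase of it. *)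

theory Defs
  imports "HOL-Analysis.Analysis"
begin

definition is_nhd :: "'a::topological_space set \<Rightarrow> 'a \<Rightarrow> bool" where
  "is_nhd V x \<longleftrightarrow> (\<exists>U. open U \<and> x \<in> U \<and> U \<subseteq> V)"

definition topological_semigroup :: "('a::topological_space \<Rightarrow> 'a \<Rightarrow> 'a) \<Rightarrow> bool" where
  "topological_semigroup m \<longleftrightarrow>
     (\<forall>x y z. m (m x y) z = m x (m y z)) \<and>
     continuous_on UNIV (\<lambda>p::'a \<times> 'a. m (fst p) (snd p))"

definition open_right_unit :: "('a::topological_space \<Rightarrow> 'a \<Rightarrow> 'a) \<Rightarrow> 'a \<Rightarrow> bool" where
  "open_right_unit m e \<longleftrightarrow>
     (\<forall>x. m x e = x) \<and> (\<forall>V x. is_nhd V e \<longrightarrow> is_nhd (m x ` V) x)"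

definition semiregular_space :: "'a::topological_space itself \<Rightarrow> bool" where
  "semiregular_space _ \<longleftrightarrow>
     (\<forall>(x::'a) O'. is_nhd O' x \<longrightarrow> (\<exists>U. is_nhd U x \<and> interior (closure U) \<subseteq> O'))"

definition quasi_pseudometric :: "('a \<Rightarrow> 'a \<Rightarrow> real) \<Rightarrow> bool" where
  "quasi_pseudometric d \<longleftrightarrow>
     (\<forall>x y. d x y \<ge> 0) \<and> (\<forall>x. d x x = 0) \<and> (\<forall>x y z. d x z \<le> d x y + d y z)"

definition left_subinvariant :: "('a \<Rightarrow> 'a \<Rightarrow> 'a) \<Rightarrow> ('a \<Rightarrow> 'a \<Rightarrow> real) \<Rightarrow> bool" where
  "left_subinvariant m d \<longleftrightarrow> (\<forall>x y z. d (m z x) (m z y) \<le> d x y)"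

definition right_continuous_qpm :: "('a::topological_space \<Rightarrow> 'a \<Rightarrow> real) \<Rightarrow> bool" where
  "right_continuous_qpm d \<longleftrightarrow> (\<forall>x. continuous_on UNIV (d x))"

definition qball :: "('a \<Rightarrow> 'a \<Rightarrow> real) \<Rightarrow> 'a \<Rightarrow> real \<Rightarrow> 'a set" where
  "qball d x \<epsilon> = {y. d x y < \<epsilon>}"

definition qball_set :: "('a \<Rightarrow> 'a \<Rightarrow> real) \<Rightarrow> 'a set \<Rightarrow> real \<Rightarrow> 'a set" where
  "qball_set d A \<epsilon> = {y. \<exists>a\<in>A. d a y < \<epsilon>}"

definition closure_dist :: "('a::topological_space \<Rightarrow> 'a \<Rightarrow> real) \<Rightarrow> 'a set \<Rightarrow> 'a \<Rightarrow> real" where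
  "closure_dist d A x = Inf {\<epsilon>. \<epsilon> > 0 \<and> x \<in> closure (qball_set d A \<epsilon>)}"

definition closure_dist_continuous :: "('a::topological_space \<Rightarrow> 'a \<Rightarrow> real) \<Rightarrow> bool" where
  "closure_dist_continuous d \<longleftrightarrow>
     (\<forall>A. A \<noteq> {} \<longrightarrow> continuous_on UNIV (closure_dist d A))"

definition generates_topology :: "('a::topological_space \<Rightarrow> 'a \<Rightarrow> real) \<Rightarrow> bool" where
  "generates_topology d \<longleftrightarrow>
     (open :: 'a set \<Rightarrow> bool) = generate_topology {qball d x \<epsilon> | x \<epsilon>. \<epsilon> > 0}"

end

theory Submission
  imports Defs
begin


lemma inf_add_bound:
  fixes A B :: "real set"
  assumes "A \<noteq> {}" "B \<noteq> {}" "bdd_below A" "bdd_below B" "\<forall>a\<in>A. \<forall>b\<in>B. c \<le> a + b"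
  shows "c \<le> Inf A + Inf B"
proof -
  have "\<forall>b\<in>B. c - b \<le> Inf A" using assms by (metis cInf_greatest diff_le_eq)
  hence "\<forall>b\<in>B. c - Inf A \<le> b" by auto
  hence "c - Inf A \<le> Inf B" using assms cInf_greatest by blast
  thus ?thesis by simp
qed

lemma closure_open_iff: "x \<in> closure X \<longleftrightarrow> (\<forall>T. open T \<longrightarrow> x \<in> T \<longrightarrow> T \<inter> X \<noteq> {})"
  unfolding closure_iff_nhds_not_empty by blast

lemma ts_assoc: "topological_semigroup m \<Longrightarrow> m (m x y) z = m x (m y z)"
  unfolding topological_semigroup_def by blast

lemma ts_cont_right:
  assumes "topological_semigroup m" shows "continuous_on UNIV (\<lambda>s. m s u)"
proof -
  have c: "continuous_on UNIV (\<lambda>p. m (fst p) (snd p))" using assms unfolding topological_semigroup_def by blast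
  have "continuous_on UNIV (\<lambda>s. (\<lambda>p. m (fst p) (snd p)) (s, u))"
    by (rule continuous_on_compose2[OF c, of UNIV "\<lambda>s. (s, u)"]) (auto intro: continuous_intros)
  thus ?thesis by simp
qed

lemma ts_cont_left:
  assumes "topological_semigroup m" shows "continuous_on UNIV (\<lambda>s. m u s)"
proof -
  have c: "continuous_on UNIV (\<lambda>p. m (fst p) (snd p))" using assms unfolding topological_semigroup_def by blast
  have "continuous_on UNIV (\<lambda>s. (\<lambda>p. m (fst p) (snd p)) (u, s))"
    by (rule continuous_on_compose2[OF c, of UNIV "\<lambda>s. (u, s)"]) (auto intro: continuous_intros)
  thus ?thesis by simp
qed

lemma open_vimage_UNIV: "continuous_on UNIV f \<Longrightarrow> open B \<Longrightarrow> open (f -` B)"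
  using continuous_on_open_vimage[of UNIV f] by auto

lemma closure_shift:
  assumes ts: "topological_semigroup m" and ru: "\<forall>x. m x e = x"
    and q: "quasi_pseudometric d" and ls: "left_subinvariant m d"
    and p: "p \<in> closure (qball_set d A \<epsilon>)" and u: "d e u < \<delta>"
  shows "m p u \<in> closure (qball_set d A (\<epsilon>+\<delta>))"
  unfolding closure_open_iff
proof (intro allI impI)
  fix T assume T: "open T" "m p u \<in> T"
  let ?P = "(\<lambda>s. m s u) -` T"
  have "open ?P" using open_vimage_UNIV[OF ts_cont_right[OF ts] T(1)] .
  moreover have "p \<in> ?P" using T by simp
  ultimately have "?P \<inter> qball_set d A \<epsilon> \<noteq> {}" using p unfolding closure_open_iff by blast
  then obtain s a where s: "m s u \<in> T" "a \<in> A" "d a s < \<epsilon>" unfolding qball_set_def by auto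
  have "d (m s e) (m s u) \<le> d e u" using ls unfolding left_subinvariant_def by blast
  hence "d s (m s u) \<le> d e u" using ru by simp
  moreover have "d a (m s u) \<le> d a s + d s (m s u)" using q unfolding quasi_pseudometric_def by blast
  ultimately have "d a (m s u) < \<epsilon> + \<delta>" using s u by linarith
  thus "T \<inter> qball_set d A (\<epsilon>+\<delta>) \<noteq> {}" using s unfolding qball_set_def by blast
qed

lemma closure_dist_cont_generic:
  assumes ts: "topological_semigroup m" and oru: "open_right_unit m e"
    and q: "quasi_pseudometric d" and ls: "left_subinvariant m d"
    and le1: "\<forall>x y. d x y \<le> 1" and nb: "\<forall>\<delta>>0. is_nhd (qball d e \<delta>) e"
  shows "closure_dist_continuous d"
  unfolding closure_dist_continuous_def
proof (intro allI impI)
  fix A :: "'a set" assume Ane: "A \<noteq> {}"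
  have ru: "\<forall>x. m x e = x" using oru unfolding open_right_unit_def by blast
  define E where "E x = {\<epsilon>. \<epsilon> > 0 \<and> x \<in> closure (qball_set d A \<epsilon>)}" for x
  have f: "closure_dist d A = (\<lambda>x. Inf (E x))" by (simp add: closure_dist_def E_def fun_eq_iff)
  have big: "\<epsilon> \<in> E x" if "\<epsilon> > 1" for \<epsilon> x
  proof -
    obtain a where a: "a \<in> A" using Ane by blast
    have "\<forall>y. d a y < \<epsilon>" using le1 that by (meson le_less_trans)
    hence "qball_set d A \<epsilon> = UNIV" using a unfolding qball_set_def by blast
    thus ?thesis using that by (simp add: E_def)
  qed
  have ne: "E x \<noteq> {}" for x using big[of 2 x] by auto
  have bdd: "bdd_below (E x)" for x unfolding bdd_below_def E_def by (auto intro!: exI[of _ 0])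
  have up: "\<epsilon>' \<in> E x" if "\<epsilon> \<in> E x" "\<epsilon> \<le> \<epsilon>'" for \<epsilon> \<epsilon>' x
  proof -
    have "qball_set d A \<epsilon> \<subseteq> qball_set d A \<epsilon>'" using that(2) unfolding qball_set_def by force
    hence "closure (qball_set d A \<epsilon>) \<subseteq> closure (qball_set d A \<epsilon>')" by (rule closure_mono)
    thus ?thesis using that unfolding E_def by auto
  qed
  have nonneg: "0 \<le> Inf (E x)" for x using ne by (rule cInf_greatest) (simp add: E_def)
  show "continuous_on UNIV (closure_dist d A)" unfolding f continuous_on_def
  proof (intro ballI)
    fix x :: 'a
    show "((\<lambda>x. Inf (E x)) \<longlongrightarrow> Inf (E x)) (at x within UNIV)"
    proof (rule order_tendstoI)
      fix a assume "Inf (E x) < a"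
      then obtain \<epsilon> where \<epsilon>: "\<epsilon> \<in> E x" "\<epsilon> < a" using cInf_lessD[OF ne] by blast
      define \<delta> where "\<delta> = (a - \<epsilon>) / 2"
      have \<delta>: "\<delta> > 0" using \<epsilon> by (simp add: \<delta>_def)
      have "is_nhd (m x ` qball d e \<delta>) x" using oru nb \<delta> unfolding open_right_unit_def by blast
      then obtain S where S: "open S" "x \<in> S" "S \<subseteq> m x ` qball d e \<delta>" unfolding is_nhd_def by blast
      have "Inf (E y) < a" if yS: "y \<in> S" for y
      proof -
        obtain u where u: "y = m x u" "d e u < \<delta>" using S yS unfolding qball_def by blast
        have "x \<in> closure (qball_set d A \<epsilon>)" using \<epsilon> by (simp add: E_def)
        hence "y \<in> closure (qball_set d A (\<epsilon>+\<delta>))" using closure_shift[OF ts ru q ls _ u(2)] u(1) by blast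
        hence "\<epsilon>+\<delta> \<in> E y" using \<epsilon> \<delta> by (simp add: E_def)
        hence "Inf (E y) \<le> \<epsilon>+\<delta>" by (rule cInf_lower[OF _ bdd])
        thus ?thesis using \<epsilon> by (simp add: \<delta>_def field_simps)
      qed
      thus "\<forall>\<^sub>F y in at x within UNIV. Inf (E y) < a" unfolding eventually_at_topological using S by blast
    next
      fix a assume a: "a < Inf (E x)"
      show "\<forall>\<^sub>F y in at x within UNIV. a < Inf (E y)"
      proof (cases "a < 0")
        case True
        have "\<forall>y. a < Inf (E y)"
        proof
          fix y show "a < Inf (E y)" using True nonneg[of y] by linarith
        qed
        thus ?thesis by (rule always_eventually)
      next
        case False
        define \<epsilon> where "\<epsilon> = (a + Inf (E x)) / 2"
        have e0: "\<epsilon> > 0" "a < \<epsilon>" "\<epsilon> < Inf (E x)" using False a by (auto simp: \<epsilon>_def)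
        have "\<epsilon> \<notin> E x"
        proof
          assume "\<epsilon> \<in> E x"
          hence "Inf (E x) \<le> \<epsilon>" by (rule cInf_lower[OF _ bdd])
          thus False using e0(3) by simp
        qed
        hence "x \<notin> closure (qball_set d A \<epsilon>)" using e0 by (simp add: E_def)
        then obtain T where T: "open T" "x \<in> T" "T \<inter> qball_set d A \<epsilon> = {}"
          unfolding closure_open_iff by blast
        have "a < Inf (E y)" if yT: "y \<in> T" for y
        proof -
          have "T \<inter> closure (qball_set d A \<epsilon>) = {}" using open_Int_closure_eq_empty[OF T(1)] T(3) by simp
          hence "y \<notin> closure (qball_set d A \<epsilon>)" using yT by blast
          hence "\<epsilon> \<notin> E y" by (simp add: E_def)
          have "\<forall>z\<in>E y. \<epsilon> \<le> z"
          proof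
            fix z assume "z \<in> E y"
            show "\<epsilon> \<le> z"
            proof (rule ccontr)
              assume "\<not> \<epsilon> \<le> z"
              hence "\<epsilon> \<in> E y" using up[OF \<open>z \<in> E y\<close>, of \<epsilon>] by simp
              thus False using \<open>\<epsilon> \<notin> E y\<close> by simp
            qed
          qed
          hence "\<epsilon> \<le> Inf (E y)" using ne[of y] cInf_greatest[of "E y" \<epsilon>] by blast
          thus ?thesis using e0 by simp
        qed
        thus ?thesis unfolding eventually_at_topological using T by blast
      qed
    qed
  qed
qed




lemma step_nhd:
  assumes ts: "topological_semigroup m" and ru: "\<forall>x. m x e = x"
    and V: "open V" "e \<in> V"
  shows "\<exists>W. open W \<and> e \<in> W \<and> W \<subseteq> V \<and> (\<forall>a\<in>W. \<forall>b\<in>W. m a b \<in> V)"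
proof -
  have c: "continuous_on UNIV (\<lambda>p. m (fst p) (snd p))" using ts unfolding topological_semigroup_def by blast
  have o: "open ((\<lambda>p. m (fst p) (snd p)) -` V)" by (rule open_vimage_UNIV[OF c V(1)])
  have mem: "(e, e) \<in> (\<lambda>p. m (fst p) (snd p)) -` V" using ru V by simp
  obtain P Q where PQ: "open P" "open Q" "(e,e) \<in> P \<times> Q" "P \<times> Q \<subseteq> (\<lambda>p. m (fst p) (snd p)) -` V"
    by (rule open_prod_elim[OF o mem])
  show ?thesis
  proof (intro exI[of _ "P \<inter> Q \<inter> V"] conjI ballI)
    fix a b assume "a \<in> P \<inter> Q \<inter> V" "b \<in> P \<inter> Q \<inter> V"
    hence "(a, b) \<in> P \<times> Q" by blast
    hence "(a, b) \<in> (\<lambda>p. m (fst p) (snd p)) -` V" using PQ(4) by blast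
    thus "m a b \<in> V" by simp
  qed (use PQ V in \<open>auto simp: open_Int\<close>)
qed

lemma step_nhd3:
  assumes ts: "topological_semigroup m" and ru: "\<forall>x. m x e = x"
    and V: "open V" "e \<in> V"
  shows "\<exists>W. open W \<and> e \<in> W \<and> W \<subseteq> V \<and> (\<forall>a\<in>W. \<forall>b\<in>W. \<forall>c\<in>W. m (m a b) c \<in> V)"
proof -
  obtain W1 where W1: "open W1" "e \<in> W1" "W1 \<subseteq> V" "\<forall>a\<in>W1. \<forall>b\<in>W1. m a b \<in> V"
    using step_nhd[OF ts ru V] by blast
  obtain W2 where W2: "open W2" "e \<in> W2" "W2 \<subseteq> W1" "\<forall>a\<in>W2. \<forall>b\<in>W2. m a b \<in> W1"
    using step_nhd[OF ts ru W1(1,2)] by blast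
  show ?thesis
  proof (intro exI[of _ W2] conjI ballI)
    fix a b c assume "a \<in> W2" "b \<in> W2" "c \<in> W2"
    thus "m (m a b) c \<in> V" using W1(4) W2(3,4) by blast
  qed (use W1 W2 in auto)
qed

lemma foldl_assoc:
  assumes "topological_semigroup m"
  shows "foldl m (m z x) us = m z (foldl m x us)"
  using assms by (induction us arbitrary: x) (auto simp: ts_assoc)

locale sgc =
  fixes m :: "'a::first_countable_topology \<Rightarrow> 'a \<Rightarrow> 'a" and e :: 'a
  assumes ts: "topological_semigroup m" and oru: "open_right_unit m e"
begin

lemma ru: "\<forall>x. m x e = x" using oru unfolding open_right_unit_def by blast

lemma foldl_e: "foldl m x us = m x (foldl m e us)"
  using foldl_assoc[OF ts, of x e us] ru by simp

definition Bs :: "nat \<Rightarrow> 'a set" where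
  "Bs = (SOME A. (\<forall>i. e \<in> A i \<and> open (A i)) \<and> (\<forall>S. open S \<and> e \<in> S \<longrightarrow> (\<exists>i. A i \<subseteq> S)))"

lemma Bs: "\<forall>i. e \<in> Bs i \<and> open (Bs i)" "\<forall>S. open S \<and> e \<in> S \<longrightarrow> (\<exists>i. Bs i \<subseteq> S)"
  using someI_ex[OF first_countable_basis[of e]] unfolding Bs_def by blast+

primrec U :: "nat \<Rightarrow> 'a set" where
  "U 0 = UNIV"
| "U (Suc n) = (SOME W. open W \<and> e \<in> W \<and> W \<subseteq> U n \<inter> Bs n \<and> (\<forall>a\<in>W. \<forall>b\<in>W. \<forall>c\<in>W. m (m a b) c \<in> U n))"

lemma ex_W:
  assumes "open V" "e \<in> V" "V \<subseteq> X" "V \<subseteq> Y"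
  shows "\<exists>W. open W \<and> e \<in> W \<and> W \<subseteq> X \<inter> Y \<and> (\<forall>a\<in>W. \<forall>b\<in>W. \<forall>c\<in>W. m (m a b) c \<in> X)"
proof -
  obtain W where W: "open W" "e \<in> W" "W \<subseteq> V" "\<forall>a\<in>W. \<forall>b\<in>W. \<forall>c\<in>W. m (m a b) c \<in> V"
    using step_nhd3[OF ts ru assms(1,2)] by blast
  show ?thesis
  proof (intro exI[of _ W] conjI)
    show "W \<subseteq> X \<inter> Y" using W(3) assms(3,4) by blast
    show "\<forall>a\<in>W. \<forall>b\<in>W. \<forall>c\<in>W. m (m a b) c \<in> X" using W(4) assms(3) by blast
  qed (use W in simp_all)
qed

lemma U_props: "open (U n) \<and> e \<in> U n \<and> U (Suc n) \<subseteq> U n \<inter> Bs n \<and>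
   (\<forall>a\<in>U (Suc n). \<forall>b\<in>U (Suc n). \<forall>c\<in>U (Suc n). m (m a b) c \<in> U n)"
proof (induction n)
  case 0
  have ex: "\<exists>W. open W \<and> e \<in> W \<and> W \<subseteq> U 0 \<inter> Bs 0 \<and> (\<forall>a\<in>W. \<forall>b\<in>W. \<forall>c\<in>W. m (m a b) c \<in> U 0)"
    by (rule ex_W[of "Bs 0"]) (use Bs(1) in auto)
  show ?case using someI_ex[OF ex] by simp
next
  case (Suc n)
  have oS: "open (U (Suc n)) \<and> e \<in> U (Suc n)"
  proof -
    have ex: "\<exists>W. open W \<and> e \<in> W \<and> W \<subseteq> U n \<inter> Bs n \<and> (\<forall>a\<in>W. \<forall>b\<in>W. \<forall>c\<in>W. m (m a b) c \<in> U n)"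
    proof (rule ex_W[of "U n \<inter> Bs n"])
      show "open (U n \<inter> Bs n)" using Bs(1) Suc.IH by (intro open_Int) blast+
      show "e \<in> U n \<inter> Bs n" using Bs(1) Suc.IH by blast
    qed auto
    show ?thesis using someI_ex[OF ex] by simp
  qed
  have ex: "\<exists>W. open W \<and> e \<in> W \<and> W \<subseteq> U (Suc n) \<inter> Bs (Suc n) \<and> (\<forall>a\<in>W. \<forall>b\<in>W. \<forall>c\<in>W. m (m a b) c \<in> U (Suc n))"
  proof (rule ex_W[of "U (Suc n) \<inter> Bs (Suc n)"])
    show "open (U (Suc n) \<inter> Bs (Suc n))" using Bs(1) oS by (intro open_Int) blast+
    show "e \<in> U (Suc n) \<inter> Bs (Suc n)" using Bs(1) oS by blast
  qed auto
  have "U (Suc (Suc n)) \<subseteq> U (Suc n) \<inter> Bs (Suc n) \<and>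
   (\<forall>a\<in>U (Suc (Suc n)). \<forall>b\<in>U (Suc (Suc n)). \<forall>c\<in>U (Suc (Suc n)). m (m a b) c \<in> U (Suc n))"
    by (subst (1 2 3 4) U.simps(2)[of "Suc n"]) (rule someI_ex[OF ex, THEN conjunct2, THEN conjunct2])
  thus ?case using oS by blast
qed

lemma U_open: "open (U n)" and U_e: "e \<in> U n" and U_sub: "U (Suc n) \<subseteq> U n \<inter> Bs n"
  and U_3: "a \<in> U (Suc n) \<Longrightarrow> b \<in> U (Suc n) \<Longrightarrow> c \<in> U (Suc n) \<Longrightarrow> m (m a b) c \<in> U n"
  using U_props[of n] by blast+

lemma U_anti: "n \<le> k \<Longrightarrow> U k \<subseteq> U n"
  by (rule lift_Suc_antimono_le[of U]) (use U_sub in blast)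

definition rho :: "'a \<Rightarrow> real" where
  "rho v = Inf {(1/2)^k | k. v \<in> U k}"

lemma rho_ne: "{(1/2::real)^k | k. v \<in> U k} \<noteq> {}" by (auto intro: exI[of _ 0])
lemma rho_bdd: "bdd_below {(1/2::real)^k | k. v \<in> U k}"
  unfolding bdd_below_def by (auto intro!: exI[of _ 0])

lemma rho_nonneg: "0 \<le> rho v"
  unfolding rho_def by (rule cInf_greatest[OF rho_ne]) auto

lemma rho_le: "v \<in> U k \<Longrightarrow> rho v \<le> (1/2)^k"
  unfolding rho_def by (rule cInf_lower[OF _ rho_bdd]) auto

lemma rho_lt: assumes "rho v < (1/2)^n" shows "v \<in> U (Suc n)"
proof -
  obtain k where k: "v \<in> U k" "(1/2::real)^k < (1/2)^n"
    using cInf_lessD[OF rho_ne assms[unfolded rho_def]] by blast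
  hence "n < k" by simp
  thus ?thesis using U_anti[of "Suc n" k] k(1) by auto
qed

lemma sum_rho_nonneg: "0 \<le> sum_list (map rho us)"
  by (rule sum_list_nonneg) (auto simp: rho_nonneg)


lemma sum_take_drop: "sum_list (map rho (take j us)) + sum_list (map rho (drop j us)) = sum_list (map rho us)"
  by (metis append_take_drop_id map_append sum_list_append)

lemma frink: "sum_list (map rho us) < (1/2)^n \<Longrightarrow> \<exists>u\<in>U n. foldl m x us = m x u"
proof (induction "length us" arbitrary: us n x rule: less_induct)
  case less
  show ?case
  proof (cases "us = []")
    case True
    have "foldl m x us = m x e" using True ru by simp
    thus ?thesis using U_e[of n] by blast
  next
    case False
    define k where "k = length us"
    have k0: "0 < k" using False by (simp add: k_def)
    define h :: real where "h = (1/2)^(Suc n)"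
    have h2: "(1/2::real)^n = 2 * h" by (simp add: h_def)
    define J where "J = {j. j < k \<and> sum_list (map rho (take j us)) < h}"
    have "0 \<in> J" using k0 by (simp add: J_def h_def)
    have finJ: "finite J" by (simp add: J_def)
    define j where "j = Max J"
    have jJ: "j \<in> J" unfolding j_def using Max_in[OF finJ] \<open>0 \<in> J\<close> by blast
    hence jk: "j < k" and pre: "sum_list (map rho (take j us)) < h" by (auto simp: J_def)
    define c where "c = us ! j"
    define suf where "suf = drop (Suc j) us"
    have us_eq: "us = take j us @ c # suf" using jk id_take_nth_drop[of j us] by (simp add: c_def suf_def k_def)
    have tot: "sum_list (map rho us) = sum_list (map rho (take j us)) + rho c + sum_list (map rho suf)"
      by (subst us_eq) simp
    have n1: "0 \<le> sum_list (map rho (take j us))" "0 \<le> sum_list (map rho suf)"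
      by (rule sum_rho_nonneg)+
    have "rho c < (1/2)^n" using tot n1 less.prems by linarith
    hence cU: "c \<in> U (Suc n)" by (rule rho_lt)
    have sufh: "sum_list (map rho suf) < h"
    proof (cases "Suc j < k")
      case True
      have "Suc j \<notin> J" using finJ j_def Max_ge[OF finJ] by (metis Suc_n_not_le_n)
      hence "h \<le> sum_list (map rho (take (Suc j) us))" using True by (auto simp: J_def)
      moreover have "take (Suc j) us = take j us @ [c]"
        using take_Suc_conv_app_nth[of j us] jk by (simp add: c_def k_def)
      ultimately have "h \<le> sum_list (map rho (take j us)) + rho c" by simp
      thus ?thesis using tot h2 less.prems by linarith
    next
      case False
      hence "suf = []" using jk by (simp add: suf_def k_def)
      thus ?thesis by (simp add: h_def)
    qed
    have l1: "length (take j us) < length us" using jk by (simp add: k_def)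
    obtain a where a: "a \<in> U (Suc n)" "foldl m x (take j us) = m x a"
      using less.hyps[OF l1, of "Suc n" x] pre by (auto simp: h_def)
    have l2: "length suf < length us" using k0 by (simp add: suf_def k_def)
    obtain b where b: "b \<in> U (Suc n)" "foldl m (m (m x a) c) suf = m (m (m x a) c) b"
      using less.hyps[OF l2, of "Suc n" "m (m x a) c"] sufh by (auto simp: h_def)
    have "foldl m x us = foldl m (m (foldl m x (take j us)) c) suf"
      by (subst us_eq) simp
    also have "\<dots> = m x (m (m a c) b)" using a(2) b(2) by (simp add: ts_assoc[OF ts])
    finally show ?thesis using U_3[OF a(1) cU b(1)] by blast
  qed
qed


definition D :: "'a \<Rightarrow> 'a \<Rightarrow> real set" where
  "D x y = {sum_list (map rho us) | us. foldl m x us = y} \<union> {1}"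

definition d1 :: "'a \<Rightarrow> 'a \<Rightarrow> real" where
  "d1 x y = Inf (D x y)"

lemma D_ne: "D x y \<noteq> {}" by (simp add: D_def)
lemma D_nonneg: "z \<in> D x y \<Longrightarrow> 0 \<le> z"
  unfolding D_def using sum_rho_nonneg by auto
lemma D_bdd: "bdd_below (D x y)"
  unfolding bdd_below_def using D_nonneg by blast

lemma d1_nonneg: "0 \<le> d1 x y"
  unfolding d1_def by (rule cInf_greatest[OF D_ne]) (rule D_nonneg)

lemma d1_le1: "d1 x y \<le> 1"
  unfolding d1_def by (rule cInf_lower[OF _ D_bdd]) (simp add: D_def)

lemma d1_chain: "foldl m x us = y \<Longrightarrow> d1 x y \<le> sum_list (map rho us)"
  unfolding d1_def by (rule cInf_lower[OF _ D_bdd]) (auto simp: D_def)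

lemma d1_refl: "d1 x x = 0"
  using d1_chain[of x "[]" x] d1_nonneg[of x x] by simp

lemma d1_lt: assumes "d1 x y < \<epsilon>"
  shows "1 < \<epsilon> \<or> (\<exists>us. foldl m x us = y \<and> sum_list (map rho us) < \<epsilon>)"
proof -
  obtain z where "z \<in> D x y" "z < \<epsilon>" using cInf_lessD[OF D_ne assms[unfolded d1_def]] by blast
  thus ?thesis unfolding D_def by auto
qed

lemma d1_triangle: "d1 x z \<le> d1 x y + d1 y z"
  unfolding d1_def[of x y] d1_def[of y z]
proof (rule inf_add_bound[OF D_ne D_ne D_bdd D_bdd], intro ballI)
  fix a b assume a: "a \<in> D x y" and b: "b \<in> D y z"
  have a0: "0 \<le> a" and b0: "0 \<le> b" using a b D_nonneg by blast+
  show "d1 x z \<le> a + b"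
  proof (cases "a = 1 \<or> b = 1")
    case True
    thus ?thesis using d1_le1[of x z] a0 b0 by auto
  next
    case False
    then obtain us vs where us: "foldl m x us = y" "a = sum_list (map rho us)"
      and vs: "foldl m y vs = z" "b = sum_list (map rho vs)"
      using a b unfolding D_def by auto
    have "foldl m x (us @ vs) = z" using us vs by simp
    hence "d1 x z \<le> sum_list (map rho (us @ vs))" by (rule d1_chain)
    thus ?thesis using us vs by simp
  qed
qed

lemma d1_qpm: "quasi_pseudometric d1"
  unfolding quasi_pseudometric_def using d1_nonneg d1_refl d1_triangle by blast

lemma d1_subinv: "left_subinvariant m d1"
  unfolding left_subinvariant_def d1_def
proof (intro allI)
  fix x y z
  have "D x y \<subseteq> D (m z x) (m z y)"
    unfolding D_def using foldl_assoc[OF ts] by fastforce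
  thus "Inf (D (m z x) (m z y)) \<le> Inf (D x y)" by (rule cInf_superset_mono[OF D_ne D_bdd])
qed

lemma d1_ball_sup: "(1/2)^n < \<epsilon> \<Longrightarrow> m x ` U n \<subseteq> qball d1 x \<epsilon>"
proof
  fix y assume h: "(1/2)^n < \<epsilon>" and "y \<in> m x ` U n"
  then obtain u where u: "u \<in> U n" "y = m x u" by blast
  have "d1 x y \<le> rho u" using d1_chain[of x "[u]" y] u by simp
  also have "\<dots> \<le> (1/2)^n" by (rule rho_le[OF u(1)])
  finally show "y \<in> qball d1 x \<epsilon>" using h by (simp add: qball_def)
qed

lemma d1_ball_sub: "qball d1 x ((1/2)^n) \<subseteq> m x ` U n"
proof
  fix y assume "y \<in> qball d1 x ((1/2)^n)"
  hence "d1 x y < (1/2)^n" by (simp add: qball_def)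
  moreover have "\<not> 1 < (1/2::real)^n" using power_le_one[of "1/2::real" n] by simp
  ultimately obtain us where us: "foldl m x us = y" "sum_list (map rho us) < (1/2)^n"
    using d1_lt by blast
  obtain u where "u \<in> U n" "foldl m x us = m x u" using frink[OF us(2)] by blast
  thus "y \<in> m x ` U n" using us(1) by blast
qed

lemma d1_P: assumes "d1 y w < b" "b \<le> 1" shows "\<exists>u. w = m y u \<and> d1 e u < b"
proof -
  obtain us where us: "foldl m y us = w" "sum_list (map rho us) < b"
    using d1_lt[OF assms(1)] assms(2) by auto
  have "w = m y (foldl m e us)" using us(1) foldl_e[of y us] by (rule trans[OF sym])
  moreover have "d1 e (foldl m e us) < b" using d1_chain[of e us "foldl m e us"] us(2) by simp
  ultimately show ?thesis by blast
qed

lemma small_pow: "0 < \<epsilon> \<Longrightarrow> \<exists>n. (1/2::real)^n < \<epsilon>"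
  by (rule real_arch_pow_inv) simp_all

lemma is_nhd_mono: "is_nhd V x \<Longrightarrow> V \<subseteq> W \<Longrightarrow> is_nhd W x"
  unfolding is_nhd_def by blast

lemma d1_nb: "\<forall>\<delta>>0. is_nhd (qball d1 e \<delta>) e"
proof (intro allI impI)
  fix \<delta> :: real assume "0 < \<delta>"
  then obtain n where n: "(1/2::real)^n < \<delta>" using small_pow by blast
  have "is_nhd (U n) e" unfolding is_nhd_def using U_open U_e by blast
  hence "is_nhd (m e ` U n) e" using oru unfolding open_right_unit_def by blast
  thus "is_nhd (qball d1 e \<delta>) e" using d1_ball_sup[OF n] by (rule is_nhd_mono)
qed

lemma d1_base: assumes "open S" "x \<in> S" shows "\<exists>\<epsilon>>0. qball d1 x \<epsilon> \<subseteq> S"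
proof -
  have o: "open (m x -` S)" by (rule open_vimage_UNIV[OF ts_cont_left[OF ts] assms(1)])
  have "e \<in> m x -` S" using assms(2) ru by simp
  then obtain i where i: "Bs i \<subseteq> m x -` S" using Bs(2) o by blast
  have "qball d1 x ((1/2)^Suc i) \<subseteq> m x ` U (Suc i)" by (rule d1_ball_sub)
  also have "\<dots> \<subseteq> S" using U_sub[of i] i by blast
  finally show ?thesis by (intro exI[of _ "(1/2)^Suc i"]) simp
qed

end

lemma ball_open_generic:
  assumes ts: "topological_semigroup m" and oru: "open_right_unit m e"
    and q: "quasi_pseudometric d" and ls: "left_subinvariant m d"
    and nb: "\<forall>\<delta>>0. is_nhd (qball d e \<delta>) e"
  shows "open (qball d x \<epsilon>)"
  unfolding open_subopen[of "qball d x \<epsilon>"]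
proof
  fix y assume "y \<in> qball d x \<epsilon>"
  hence y: "d x y < \<epsilon>" by (simp add: qball_def)
  define \<delta> where "\<delta> = \<epsilon> - d x y"
  have "\<delta> > 0" using y by (simp add: \<delta>_def)
  have ru: "\<forall>x. m x e = x" and nh: "\<forall>V x. is_nhd V e \<longrightarrow> is_nhd (m x ` V) x"
    using oru unfolding open_right_unit_def by blast+
  have "is_nhd (qball d e \<delta>) e" using nb \<open>\<delta> > 0\<close> by blast
  hence "is_nhd (m y ` qball d e \<delta>) y" using nh by blast
  then obtain T where T: "open T" "y \<in> T" "T \<subseteq> m y ` qball d e \<delta>" unfolding is_nhd_def by blast
  have "m y ` qball d e \<delta> \<subseteq> qball d x \<epsilon>"
  proof
    fix z assume "z \<in> m y ` qball d e \<delta>"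
    then obtain u where u: "z = m y u" "u \<in> qball d e \<delta>" by blast
    hence u2: "d e u < \<delta>" by (simp add: qball_def)
    have "d (m y e) (m y u) \<le> d e u" using ls unfolding left_subinvariant_def by blast
    hence "d y z \<le> d e u" using ru u(1) by simp
    moreover have "d x z \<le> d x y + d y z" using q unfolding quasi_pseudometric_def by (elim conjE allE)
    ultimately have "d x z < \<epsilon>" using u2 unfolding \<delta>_def by linarith
    thus "z \<in> qball d x \<epsilon>" by (simp add: qball_def)
  qed
  hence "T \<subseteq> qball d x \<epsilon>" using T(3) by (rule subset_trans[rotated])
  thus "\<exists>T. open T \<and> y \<in> T \<and> T \<subseteq> qball d x \<epsilon>" using T(1,2) by blast
qed

lemma gen_top_generic:
  assumes op: "\<And>x \<epsilon>. \<epsilon> > 0 \<Longrightarrow> open (qball d x \<epsilon>)"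
    and base: "\<And>S x. open S \<Longrightarrow> x \<in> S \<Longrightarrow> \<exists>\<epsilon>>0. qball d x \<epsilon> \<subseteq> S"
    and refl: "\<And>x. d x x = 0"
  shows "generates_topology d"
  unfolding generates_topology_def
proof (rule ext, rule iffI)
  fix S :: "'a set" assume "open S"
  define K where "K = {qball d x \<epsilon> | x \<epsilon>. \<epsilon> > 0 \<and> qball d x \<epsilon> \<subseteq> S}"
  have "\<Union>K = S"
  proof
    show "\<Union>K \<subseteq> S" by (auto simp: K_def)
    show "S \<subseteq> \<Union>K"
    proof
      fix x assume "x \<in> S"
      then obtain \<epsilon> where "\<epsilon> > 0" "qball d x \<epsilon> \<subseteq> S" using base \<open>open S\<close> by blast
      moreover have "x \<in> qball d x \<epsilon>" using \<open>\<epsilon> > 0\<close> refl by (simp add: qball_def)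
      ultimately show "x \<in> \<Union>K" unfolding K_def by blast
    qed
  qed
  moreover have "generate_topology {qball d x \<epsilon> | x \<epsilon>. \<epsilon> > 0} (\<Union>K)"
    by (rule generate_topology.UN) (auto simp: K_def intro: generate_topology.Basis)
  ultimately show "generate_topology {qball d x \<epsilon> | x \<epsilon>. \<epsilon> > 0} S" by simp
next
  fix S :: "'a set" assume "generate_topology {qball d x \<epsilon> | x \<epsilon>. \<epsilon> > 0} S"
  thus "open S"
  proof (induction rule: generate_topology.induct)
    case UNIV thus ?case by simp
  next
    case (Int a b) thus ?case by (simp add: open_Int)
  next
    case (UN K) thus ?case by (auto intro: open_Union)
  next
    case (Basis s) thus ?case using op by blast
  qed
qed

context sgc begin

lemma d1_gen: "generates_topology d1"
proof (rule gen_top_generic)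
  show "open (qball d1 x \<epsilon>)" if "\<epsilon> > 0" for x \<epsilon>
    by (rule ball_open_generic[OF ts oru d1_qpm d1_subinv d1_nb])
  show "\<exists>\<epsilon>>0. qball d1 x \<epsilon> \<subseteq> S" if "open S" "x \<in> S" for S x
    using d1_base that by blast
  show "d1 x x = 0" for x by (rule d1_refl)
qed

lemma d1_cdc: "closure_dist_continuous d1"
  by (rule closure_dist_cont_generic[OF ts oru d1_qpm d1_subinv _ d1_nb]) (simp add: d1_le1)

lemma part1: "\<exists>d. quasi_pseudometric d \<and> left_subinvariant m d \<and> closure_dist_continuous d \<and> generates_topology d"
  using d1_qpm d1_subinv d1_cdc d1_gen by blast

end



context sgc begin

definition d2 :: "'a \<Rightarrow> 'a \<Rightarrow> real" where
  "d2 x = closure_dist d1 {x}"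

definition E2 :: "'a \<Rightarrow> 'a \<Rightarrow> real set" where
  "E2 x y = {\<epsilon>. \<epsilon> > 0 \<and> y \<in> closure (qball d1 x \<epsilon>)}"

lemma qball_set_single: "qball_set d {x} \<epsilon> = qball d x \<epsilon>"
  by (simp add: qball_set_def qball_def)

lemma d2_eq: "d2 x y = Inf (E2 x y)"
  by (simp add: d2_def closure_dist_def E2_def qball_set_single)

lemma E2_gt: assumes "d1 x y < \<epsilon>" shows "\<epsilon> \<in> E2 x y"
proof -
  have "\<epsilon> > 0" using assms d1_nonneg[of x y] by linarith
  moreover have "y \<in> qball d1 x \<epsilon>" using assms by (simp add: qball_def)
  hence "y \<in> closure (qball d1 x \<epsilon>)" using closure_subset by blast
  ultimately show ?thesis by (simp add: E2_def)
qed

lemma E2_ne: "E2 x y \<noteq> {}" using E2_gt[of x y 2] d1_le1[of x y] by force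
lemma E2_bdd: "bdd_below (E2 x y)" unfolding bdd_below_def E2_def by (auto intro!: exI[of _ 0])

lemma d2_nonneg: "0 \<le> d2 x y"
  unfolding d2_eq by (rule cInf_greatest[OF E2_ne]) (simp add: E2_def)

lemma d2_le_d1: "d2 x y \<le> d1 x y"
proof (rule ccontr)
  assume "\<not> d2 x y \<le> d1 x y"
  hence lt: "d1 x y < (d1 x y + d2 x y)/2" "(d1 x y + d2 x y)/2 < d2 x y" by auto
  have "d2 x y \<le> (d1 x y + d2 x y)/2"
    using cInf_lower[OF E2_gt[OF lt(1)] E2_bdd] by (simp add: d2_eq)
  thus False using lt(2) by simp
qed

lemma d2_refl: "d2 x x = 0" using d2_le_d1[of x x] d2_nonneg[of x x] d1_refl[of x] by simp
lemma d2_le1: "d2 x y \<le> 1" using d2_le_d1[of x y] d1_le1[of x y] by simp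

lemma d2_triangle: "d2 x z \<le> d2 x y + d2 y z"
  unfolding d2_eq[of x y] d2_eq[of y z]
proof (rule inf_add_bound[OF E2_ne E2_ne E2_bdd E2_bdd], intro ballI)
  fix a b assume a: "a \<in> E2 x y" and b: "b \<in> E2 y z"
  have a0: "a > 0" and yc: "y \<in> closure (qball_set d1 {x} a)" using a by (auto simp: E2_def qball_set_single)
  have b0: "b > 0" and zc: "z \<in> closure (qball d1 y b)" using b by (auto simp: E2_def)
  show "d2 x z \<le> a + b"
  proof (cases "b \<le> 1")
    case False
    thus ?thesis using d2_le1[of x z] a0 by linarith
  next
    case True
    have "qball d1 y b \<subseteq> closure (qball_set d1 {x} (a+b))"
    proof
      fix w assume "w \<in> qball d1 y b"
      hence "d1 y w < b" by (simp add: qball_def)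
      then obtain u where u: "w = m y u" "d1 e u < b" using d1_P True by blast
      show "w \<in> closure (qball_set d1 {x} (a+b))"
        using closure_shift[OF ts ru d1_qpm d1_subinv yc u(2)] u(1) by simp
    qed
    hence "closure (qball d1 y b) \<subseteq> closure (qball_set d1 {x} (a+b))"
      using closure_mono closure_closure by metis
    hence "z \<in> closure (qball d1 x (a+b))" using zc by (auto simp: qball_set_single)
    hence "a + b \<in> E2 x z" using a0 b0 by (simp add: E2_def)
    thus ?thesis unfolding d2_eq by (rule cInf_lower[OF _ E2_bdd])
  qed
qed

lemma d2_qpm: "quasi_pseudometric d2"
  unfolding quasi_pseudometric_def using d2_nonneg d2_refl d2_triangle by blast

lemma d2_subinv: "left_subinvariant m d2"
  unfolding left_subinvariant_def d2_eq
proof (intro allI)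
  fix x y z
  have "E2 x y \<subseteq> E2 (m z x) (m z y)"
  proof
    fix a assume "a \<in> E2 x y"
    hence a0: "a > 0" and yc: "y \<in> closure (qball d1 x a)" by (auto simp: E2_def)
    have "m z ` closure (qball d1 x a) \<subseteq> closure (qball d1 (m z x) a)"
    proof (rule image_closure_subset)
      show "continuous_on (closure (qball d1 x a)) (m z)"
        using ts_cont_left[OF ts, of z] continuous_on_subset by blast
      show "closed (closure (qball d1 (m z x) a))" by simp
      show "m z ` qball d1 x a \<subseteq> closure (qball d1 (m z x) a)"
      proof
        fix w assume "w \<in> m z ` qball d1 x a"
        then obtain v where v: "w = m z v" "d1 x v < a" by (auto simp: qball_def)
        have "d1 (m z x) (m z v) \<le> d1 x v" using d1_subinv unfolding left_subinvariant_def by blast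
        hence "w \<in> qball d1 (m z x) a" using v by (simp add: qball_def)
        thus "w \<in> closure (qball d1 (m z x) a)" using closure_subset by blast
      qed
    qed
    thus "a \<in> E2 (m z x) (m z y)" using yc a0 by (auto simp: E2_def)
  qed
  thus "Inf (E2 (m z x) (m z y)) \<le> Inf (E2 x y)" by (rule cInf_superset_mono[OF E2_ne E2_bdd])
qed

lemma d2_nb: "\<forall>\<delta>>0. is_nhd (qball d2 e \<delta>) e"
proof (intro allI impI)
  fix \<delta> :: real assume "\<delta> > 0"
  hence "is_nhd (qball d1 e \<delta>) e" using d1_nb by blast
  moreover have "qball d1 e \<delta> \<subseteq> qball d2 e \<delta>"
  proof
    fix y assume "y \<in> qball d1 e \<delta>"
    thus "y \<in> qball d2 e \<delta>" using d2_le_d1[of e y] by (simp add: qball_def)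
  qed
  ultimately show "is_nhd (qball d2 e \<delta>) e" by (rule is_nhd_mono)
qed

lemma d2_cdc: "closure_dist_continuous d2"
  by (rule closure_dist_cont_generic[OF ts oru d2_qpm d2_subinv _ d2_nb]) (simp add: d2_le1)

lemma d2_rc: "right_continuous_qpm d2"
  unfolding right_continuous_qpm_def d2_def using d1_cdc unfolding closure_dist_continuous_def by blast

lemma d2_sub_closure: "qball d2 x \<epsilon> \<subseteq> closure (qball d1 x \<epsilon>)"
proof
  fix y assume "y \<in> qball d2 x \<epsilon>"
  hence "Inf (E2 x y) < \<epsilon>" by (simp add: qball_def d2_eq)
  then obtain a where a: "a \<in> E2 x y" "a < \<epsilon>" using cInf_lessD[OF E2_ne] by blast
  hence "y \<in> closure (qball d1 x a)" by (simp add: E2_def)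
  moreover have "qball d1 x a \<subseteq> qball d1 x \<epsilon>" using a(2) by (auto simp: qball_def)
  ultimately show "y \<in> closure (qball d1 x \<epsilon>)" using closure_mono by blast
qed

lemma d2_gen: assumes sr: "semiregular_space TYPE('a)" shows "generates_topology d2"
proof (rule gen_top_generic)
  show "open (qball d2 x \<epsilon>)" if "\<epsilon> > 0" for x \<epsilon>
  proof -
    have "qball d2 x \<epsilon> = d2 x -` {..<\<epsilon>}" by (auto simp: qball_def)
    moreover have "continuous_on UNIV (d2 x)" using d2_rc unfolding right_continuous_qpm_def by blast
    ultimately show ?thesis using open_vimage_UNIV[of "d2 x" "{..<\<epsilon>}"] by simp
  qed
  show "\<exists>\<epsilon>>0. qball d2 x \<epsilon> \<subseteq> S" if S: "open S" "x \<in> S" for S x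
  proof -
    have "is_nhd S x" using S unfolding is_nhd_def by blast
    then obtain V where V: "is_nhd V x" "interior (closure V) \<subseteq> S"
      using sr unfolding semiregular_space_def by blast
    then obtain V' where V': "open V'" "x \<in> V'" "V' \<subseteq> V" unfolding is_nhd_def by blast
    obtain \<epsilon> where \<epsilon>: "\<epsilon> > 0" "qball d1 x \<epsilon> \<subseteq> V'" using d1_base[OF V'(1,2)] by blast
    have "qball d2 x \<epsilon> \<subseteq> closure V"
      using d2_sub_closure[of x \<epsilon>] closure_mono[of "qball d1 x \<epsilon>" V] \<epsilon>(2) V'(3) by blast
    moreover have "open (qball d2 x \<epsilon>)"
    proof -
      have "qball d2 x \<epsilon> = d2 x -` {..<\<epsilon>}" by (auto simp: qball_def)
      moreover have "continuous_on UNIV (d2 x)" using d2_rc unfolding right_continuous_qpm_def by blast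
      ultimately show ?thesis using open_vimage_UNIV[of "d2 x" "{..<\<epsilon>}"] by simp
    qed
    ultimately have "qball d2 x \<epsilon> \<subseteq> interior (closure V)" by (rule interior_maximal)
    thus ?thesis using V(2) \<epsilon>(1) by blast
  qed
  show "d2 x x = 0" for x by (rule d2_refl)
qed

lemma part2: "semiregular_space TYPE('a) \<Longrightarrow>
  (\<exists>d. quasi_pseudometric d \<and> left_subinvariant m d \<and> closure_dist_continuous d \<and> right_continuous_qpm d \<and> generates_topology d)"
  using d2_qpm d2_subinv d2_cdc d2_rc d2_gen by blast

end

theorem corollary6p3:
  fixes m :: "'a::first_countable_topology \<Rightarrow> 'a \<Rightarrow> 'a" and e :: 'a
  assumes "topological_semigroup m"
    and "open_right_unit m e"
  shows "(\<exists>d. quasi_pseudometric d \<and> left_subinvariant m d \<and>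
               closure_dist_continuous d \<and> generates_topology d)
       \<and> (semiregular_space TYPE('a) \<longrightarrow>
            (\<exists>d. quasi_pseudometric d \<and> left_subinvariant m d \<and>
                 closure_dist_continuous d \<and> right_continuous_qpm d \<and> generates_topology d))"
proof -
  interpret sgc m e using assms by unfold_locales
  show ?thesis using part1 part2 by blast
qed


end
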